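(* Let $\mu=\mu_1\otimes\cdots\otimes\mu_n$ be a product probability measure on $\mathbb{R}^n$, where each $\mu_k$ is a log-concave probability measure on $\mathbb{R}$ with density $g_k$ and $\mathrm{Var}(X_k)=1$ for $X_k\sim\mu_k$. Then $\Gamma(\mu)\leq 2n$.
   Context: A probability measure on $\mathbb{R}$ is log-concave if it has a density $g$ with $\ln g$ concave. $B_2^n$ is the Euclidean unit ball. $\mu^+(\partial A)=\liminf_{\epsilon\to0^+}\frac{\mu((A+\epsilon B_2^n)\setminus A)}{\epsilon}$ and $\Gamma(\mu)=\sup\{\mu^+(\partial A): A \text{ a convex body (compact convex set with nonempty interior)}\}$. *)

theory Defs
  imports "HOL-Probability.Probability"
begin

text \<open>A log-concave density on the real line: a nonnegative Borel function whose
  logarithm is concave as an extended-valued function, i.e. its positivity set is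
  convex and \<open>ln g\<close> is concave on it (\<open>ln g = -\<infinity>\<close> outside).\<close>
definition log_concave_density :: "(real \<Rightarrow> real) \<Rightarrow> bool" where
  "log_concave_density g \<longleftrightarrow>
     g \<in> borel_measurable lborel \<and> (\<forall>x. 0 \<le> g x) \<and>
     convex {x. 0 < g x} \<and> concave_on {x. 0 < g x} (\<lambda>x. ln (g x))"

definition enlarge :: "('a::real_normed_vector) set \<Rightarrow> real \<Rightarrow> 'a set" where
  "enlarge A \<epsilon> = {a + \<epsilon> *\<^sub>R b | a b. a \<in> A \<and> norm b \<le> 1}"

definition convex_body :: "('a::euclidean_space) set \<Rightarrow> bool" where
  "convex_body A \<longleftrightarrow> compact A \<and> convex A \<and> interior A \<noteq> {}"

definition surface_measure :: "'a::real_normed_vector measure \<Rightarrow> 'a set \<Rightarrow> ereal" where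
  "surface_measure \<mu> A =
     Liminf (at_right 0) (\<lambda>\<epsilon>. ereal (measure \<mu> (enlarge A \<epsilon> - A) / \<epsilon>))"

definition Gamma_conv :: "'a::euclidean_space measure \<Rightarrow> ereal" where
  "Gamma_conv \<mu> = (SUP A \<in> {A. convex_body A}. surface_measure \<mu> A)"

end

theory Submission
  imports Defs
begin

lemma exp_moment:
  fixes l c :: real and i :: nat
  assumes l: "0 < l" and c: "0 \<le> c"
  shows "has_bochner_integral lborel (\<lambda>x. indicator {0..} x * (x^i * (c * exp (- l * x))))
           (c * fact i / l ^ Suc i)"
proof (rule has_bochner_integral_nn_integral)
  show "(\<lambda>x. indicator {0..} x * (x^i * (c * exp (- l * x)))) \<in> borel_measurable lborel" by measurable
  show "AE x in lborel. 0 \<le> indicator {0..} x * (x^i * (c * exp (- l * x)))"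
    using c by (auto simp: indicator_def)
  show "0 \<le> c * fact i / l ^ Suc i" using l c by simp
  have "(\<integral>\<^sup>+ x. ennreal (indicator {0..} x * (x^i * (c * exp (- l * x)))) \<partial>lborel)
      = (\<integral>\<^sup>+ x. ennreal (c / l) * ennreal (erlang_density 0 l x * x ^ i) \<partial>lborel)"
    using l c by (intro nn_integral_cong) (auto simp: erlang_density_def indicator_def ennreal_mult'[symmetric] field_simps)
  also have "\<dots> = ennreal (c/l) * (\<integral>\<^sup>+ x. ennreal (erlang_density 0 l x * x ^ i) \<partial>lborel)"
    by (rule nn_integral_cmult) (auto simp: erlang_density_def)
  also have "\<dots> = ennreal (c/l) * ennreal (fact i / l ^ i)"
    using nn_integral_erlang_ith_moment[OF l, of 0 i] by simp
  also have "\<dots> = ennreal (c * fact i / l ^ Suc i)"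
    using l c by (simp add: ennreal_mult'[symmetric] field_simps)
  finally show "(\<integral>\<^sup>+ x. ennreal (indicator {0..} x * (x^i * (c * exp (- l * x)))) \<partial>lborel) = ennreal (c * fact i / l ^ Suc i)" .
qed

lemma integral_nonpos:
  fixes f :: "'a \<Rightarrow> real"
  assumes "\<And>x. f x \<le> 0"
  shows "integral\<^sup>L M f \<le> 0"
proof -
  have "0 \<le> integral\<^sup>L M (\<lambda>x. - f x)" by (rule integral_nonneg_AE) (simp add: assms)
  then show ?thesis by simp
qed

lemma pos_contra:
  fixes w :: "real \<Rightarrow> real"
  assumes int: "integrable lborel w" and nn: "\<And>t. 0 \<le> w t" and i0: "integral\<^sup>L lborel w = 0"
    and ab: "a < b" and pos: "\<And>t. a < t \<Longrightarrow> t < b \<Longrightarrow> 0 < w t"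
  shows False
proof -
  have "AE t in lborel. w t = 0"
    using integral_nonneg_eq_0_iff_AE[OF int] nn i0 by auto
  then have ae: "AE t in lborel. indicator {a<..<b} t = (0::ennreal)"
    by eventually_elim (auto simp: indicator_def dest: pos)
  then have "emeasure lborel {a<..<b} = 0"
    using nn_integral_cong_AE[OF ae] by simp
  with ab show False by simp
qed

lemma mono_cross:
  fixes w \<psi> :: "real \<Rightarrow> real"
  assumes iw: "integrable lborel w" and ipw: "integrable lborel (\<lambda>t. \<psi> t * w t)"
    and zero: "\<And>t. t \<le> 0 \<Longrightarrow> w t = 0"
    and i0: "integral\<^sup>L lborel w = 0"
    and down: "\<And>x y. 0 < y \<Longrightarrow> y \<le> x \<Longrightarrow> 0 < w x \<Longrightarrow> 0 < w y"
    and mono: "\<And>x y. 0 \<le> x \<Longrightarrow> x \<le> y \<Longrightarrow> \<psi> x \<le> \<psi> y"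
    and psi0: "\<And>t. 0 \<le> t \<Longrightarrow> 0 \<le> \<psi> t"
  shows "integral\<^sup>L lborel (\<lambda>t. \<psi> t * w t) \<le> 0"
proof -
  define P where "P = {t. 0 < w t}"
  have Ppos: "0 < t" if "t \<in> P" for t
  proof (rule ccontr)
    assume "\<not> 0 < t" then have "w t = 0" using zero by simp
    with that show False by (simp add: P_def)
  qed
  consider "P = {}" | "P \<noteq> {}" "bdd_above P" | "\<not> bdd_above P" by (cases "P = {}"; cases "bdd_above P") blast+
  then show ?thesis
  proof cases
    case 1
    have "\<psi> t * w t \<le> 0" for t
    proof (cases "t \<le> 0")
      case True then show ?thesis using zero by simp
    next
      case False
      then have "w t \<le> 0" using 1 unfolding P_def by (auto simp: not_less)
      then show ?thesis using psi0[of t] False by (simp add: mult_nonneg_nonpos)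
    qed
    then show ?thesis by (intro integral_nonpos) auto
  next
    case 2
    define s where "s = Sup P"
    obtain x0 where "x0 \<in> P" using 2 by blast
    have s0: "0 < s" using Ppos[OF \<open>x0 \<in> P\<close>] cSup_upper[OF \<open>x0 \<in> P\<close> \<open>bdd_above P\<close>] unfolding s_def by linarith
    have pt: "(\<psi> t - \<psi> s) * w t \<le> 0" for t
    proof -
      consider "t \<le> 0" | "0 < t" "t < s" | "s < t" | "t = s" by linarith
      then show ?thesis
      proof cases
        case 1 then show ?thesis using zero by simp
      next
        case 2
        then obtain x where "x \<in> P" "t < x" using less_cSup_iff[OF \<open>P \<noteq> {}\<close> \<open>bdd_above P\<close>, of t] unfolding s_def
          by blast
        then have "0 < w t" using down[of t x] 2 unfolding P_def by auto
        moreover have "\<psi> t \<le> \<psi> s" using mono 2 by auto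
        ultimately show ?thesis by (simp add: mult_nonpos_nonneg)
      next
        case 3
        then have "t \<notin> P" using cSup_upper[of t P] \<open>bdd_above P\<close> unfolding s_def by force
        then have "w t \<le> 0" unfolding P_def by auto
        moreover have "\<psi> s \<le> \<psi> t" using mono 3 s0 by auto
        ultimately show ?thesis by (simp add: mult_nonneg_nonpos)
      qed simp
    qed
    have "integral\<^sup>L lborel (\<lambda>t. (\<psi> t - \<psi> s) * w t) \<le> 0"
      using pt by (intro integral_nonpos) auto
    moreover have "integral\<^sup>L lborel (\<lambda>t. (\<psi> t - \<psi> s) * w t)
        = integral\<^sup>L lborel (\<lambda>t. \<psi> t * w t) - \<psi> s * integral\<^sup>L lborel w"
      using iw ipw by (simp add: left_diff_distrib Bochner_Integration.integral_diff)
    ultimately show ?thesis using i0 by simp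
  next
    case 3
    have all: "0 < w t" if "0 < t" for t
    proof -
      obtain x where "x \<in> P" "t < x" using 3 unfolding bdd_above_def by (metis not_le)
      then show ?thesis using down[of t x] that unfolding P_def by auto
    qed
    have "0 \<le> w t" for t using all[of t] zero[of t] by (cases "t \<le> 0") auto
    from pos_contra[OF iw this i0, of 0 1] all show ?thesis by auto
  qed
qed

lemma quad_cross:
  fixes w :: "real \<Rightarrow> real"
  assumes iw: "integrable lborel w" and i1: "integrable lborel (\<lambda>t. t * w t)"
    and i2: "integrable lborel (\<lambda>t. t^2 * w t)"
    and zero: "\<And>t. t < 0 \<Longrightarrow> w t = 0"
    and i0: "integral\<^sup>L lborel w = 0" and i10: "integral\<^sup>L lborel (\<lambda>t. t * w t) = 0"
    and conv: "\<And>x y z. x \<le> y \<Longrightarrow> y \<le> z \<Longrightarrow> 0 < w x \<Longrightarrow> 0 < w z \<Longrightarrow> 0 < w y"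
  shows "integral\<^sup>L lborel (\<lambda>t. t^2 * w t) \<le> 0"
proof -
  define P where "P = {t. 0 < w t}"
  have Ppos: "0 \<le> t" if "t \<in> P" for t
  proof (rule ccontr)
    assume "\<not> 0 \<le> t" then have "w t = 0" using zero by simp
    with that show False by (simp add: P_def)
  qed
  then have bb: "bdd_below P" unfolding bdd_below_def by blast
  consider "P = {}" | "P \<noteq> {}" "bdd_above P" | "P \<noteq> {}" "\<not> bdd_above P" by (cases "P = {}"; cases "bdd_above P") blast+
  then show ?thesis
  proof cases
    case 1
    have "t^2 * w t \<le> 0" for t
      using 1 unfolding P_def by (auto simp: not_less intro!: mult_nonneg_nonpos)
    then show ?thesis by (intro integral_nonpos) auto
  next
    case 2
    define a where "a = Inf P"
    define b where "b = Sup P"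
    have ab: "a \<le> b" unfolding a_def b_def using cInf_le_cSup[of P] 2 bb by blast
    have pt: "(t - a) * (t - b) * w t \<le> 0" for t
    proof -
      consider "a < t" "t < b" | "t < a" | "b < t" | "t = a" | "t = b" by linarith
      then show ?thesis
      proof cases
        case 1
        obtain x where "x \<in> P" "x < t" using 1 cInf_less_iff[of P t] 2 bb unfolding a_def by blast
        moreover obtain z where "z \<in> P" "t < z" using 1 less_cSup_iff[of P t] 2 unfolding b_def by blast
        ultimately have "0 < w t" using conv[of x t z] unfolding P_def by auto
        moreover have "(t - a) * (t - b) < 0" using 1 by (simp add: mult_pos_neg)
        ultimately show ?thesis by (simp add: mult_neg_pos less_imp_le)
      next
        case 2
        then have "t \<notin> P" using bb cInf_lower[of t P] unfolding a_def by force
        then have "w t \<le> 0" unfolding P_def by auto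
        moreover have "0 \<le> (t - a) * (t - b)" using 2 ab by (simp add: mult_nonpos_nonpos)
        ultimately show ?thesis by (simp add: mult_nonneg_nonpos)
      next
        case 3
        then have "t \<notin> P" using 2 cSup_upper[of t P] unfolding b_def by force
        then have "w t \<le> 0" unfolding P_def by auto
        moreover have "0 \<le> (t - a) * (t - b)" using 3 ab by simp
        ultimately show ?thesis by (simp add: mult_nonneg_nonpos)
      qed simp_all
    qed
    have eq: "(\<lambda>t. (t - a) * (t - b) * w t) = (\<lambda>t. t^2 * w t - (a + b) * (t * w t) + (a * b) * w t)"
      by (auto simp: algebra_simps power2_eq_square)
    have "integral\<^sup>L lborel (\<lambda>t. (t - a) * (t - b) * w t) \<le> 0"
      using pt by (intro integral_nonpos) auto
    moreover have "integral\<^sup>L lborel (\<lambda>t. (t - a) * (t - b) * w t) = integral\<^sup>L lborel (\<lambda>t. t^2 * w t)"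
      unfolding eq using iw i1 i2 i0 i10 by simp
    ultimately show ?thesis by simp
  next
    case 3
    define a where "a = Inf P"
    have all: "0 < w t" if at: "a < t" for t
    proof -
      obtain x where "x \<in> P" "x < t" using cInf_less_iff[of P t] at 3(1) bb unfolding a_def by auto
      moreover obtain z where "z \<in> P" "t < z" using 3 unfolding bdd_above_def by (metis not_le)
      ultimately show ?thesis using conv[of x t z] unfolding P_def by auto
    qed
    have nn: "0 \<le> (t - a) * w t" for t
    proof (cases "a < t")
      case True then show ?thesis using all[of t] by simp
    next
      case False
      then have "t \<notin> P \<or> t = a" using bb cInf_lower[of t P] unfolding a_def by force
      then have "w t \<le> 0 \<or> t = a" unfolding P_def by auto
      then show ?thesis using False by (auto intro: mult_nonpos_nonpos)
    qed
    have int: "integrable lborel (\<lambda>t. (t - a) * w t)"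
      using iw i1 by (simp add: left_diff_distrib)
    have "integral\<^sup>L lborel (\<lambda>t. (t - a) * w t) = 0"
      using iw i1 i0 i10 by (simp add: left_diff_distrib)
    from pos_contra[OF int nn this, of a "a+1"] all show ?thesis by auto
  qed
qed

lemma lc_between:
  fixes f :: "real \<Rightarrow> real"
  assumes cvx: "convex {x. 0 < f x}" and cc: "concave_on {x. 0 < f x} (\<lambda>x. ln (f x))"
    and xy: "x < y" "y \<le> z" and fx: "0 < f x" and fz: "0 < f z"
    and lx: "c + d * x \<le> ln (f x)" and lz: "c + d * z < ln (f z)"
  shows "0 < f y \<and> c + d * y < ln (f y)"
proof -
  define th where "th = (y - x) / (z - x)"
  have th: "0 < th" "th \<le> 1" using xy by (auto simp: th_def field_simps)
  have "th * (z - x) = y - x" using xy by (simp add: th_def)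
  then have yeq: "y = (1 - th) *\<^sub>R x + th *\<^sub>R z" by (simp add: algebra_simps)
  have "y \<in> {x. 0 < f x}"
    unfolding yeq using cvx fx fz th by (intro convexD) auto
  then have fy: "0 < f y" by simp
  have "- ln (f y) \<le> (1 - th) * (- ln (f x)) + th * (- ln (f z))"
    using cc fx fz th unfolding concave_on_def convex_on_def yeq by (auto simp del: scaleR_minus_left)
  moreover have "(1 - th) * (c + d * x) + th * (c + d * z) < (1 - th) * ln (f x) + th * ln (f z)"
    using th lx lz by (intro add_le_less_mono mult_left_mono mult_strict_left_mono) auto
  moreover have "(1 - th) * (c + d * x) + th * (c + d * z) = c + d * y"
  proof -
    have "y = (1 - th) * x + th * z" using yeq by simp
    then have "d * y = d * ((1 - th) * x + th * z)" by simp
    then show ?thesis by (simp add: algebra_simps)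
  qed
  ultimately show ?thesis using fy by linarith
qed

lemma exp_ln_cmp:
  fixes C v d x :: real
  assumes "0 < C" "0 < v"
  shows "(C * exp (d * x) < v) = (ln C + d * x < ln v)"
    and "(C * exp (d * x) \<le> v) = (ln C + d * x \<le> ln v)"
proof -
  have e: "C * exp (d * x) = exp (ln C + d * x)" using assms by (simp add: exp_add)
  have v: "v = exp (ln v)" using assms by simp
  show "(C * exp (d * x) < v) = (ln C + d * x < ln v)"
    by (subst v, subst e) simp
  show "(C * exp (d * x) \<le> v) = (ln C + d * x \<le> ln v)"
    by (subst v, subst e) simp
qed

lemma ind_int:
  fixes g :: "real \<Rightarrow> real"
  shows "integrable lborel g \<Longrightarrow> integrable lborel (\<lambda>x. indicator {0..} x * g x)"
  using integrable_mult_indicator[of "{0..}" lborel g] by simp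

lemma half_bounds:
  fixes f :: "real \<Rightarrow> real"
  assumes fm: "f \<in> borel_measurable borel" and nn: "\<And>x. 0 \<le> f x"
    and cvx: "convex {x. 0 < f x}" and cc: "concave_on {x. 0 < f x} (\<lambda>x. ln (f x))"
    and m0: "0 < f 0"
    and i0: "integrable lborel f" and i2: "integrable lborel (\<lambda>x. x^2 * f x)"
  defines "p \<equiv> \<integral>x. indicator {0..} x * f x \<partial>lborel"
    and "A \<equiv> \<integral>x. indicator {0..} x * (x * f x) \<partial>lborel"
    and "S \<equiv> \<integral>x. indicator {0..} x * (x^2 * f x) \<partial>lborel"
  shows "0 \<le> p \<and> 0 \<le> A \<and> f 0 * A \<le> p^2 \<and> (f 0)^2 * S \<le> 2 * p^3 \<and> p * S \<le> 2 * A^2"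
proof -
  have [measurable]: "f \<in> borel_measurable lborel" using fm by simp
  have i1: "integrable lborel (\<lambda>x. x * f x)"
  proof (rule Bochner_Integration.integrable_bound)
    show "integrable lborel (\<lambda>x. f x + x^2 * f x)" using i0 i2 by simp
    show "(\<lambda>x. x * f x) \<in> borel_measurable lborel" by measurable
    have "\<bar>x\<bar> \<le> 1 + x^2" for x :: real
    proof -
      have "0 \<le> (\<bar>x\<bar> - 1)^2" by simp
      moreover have "(\<bar>x\<bar> - 1)^2 = x^2 - 2*\<bar>x\<bar> + 1"
        by (simp add: power2_eq_square algebra_simps abs_mult_self_eq)
      ultimately show ?thesis by linarith
    qed
    then have "\<bar>x * f x\<bar> \<le> \<bar>f x + x^2 * f x\<bar>" for x
    proof -
      have "\<bar>x\<bar> * f x \<le> (1 + x^2) * f x" using nn[of x] \<open>\<bar>x\<bar> \<le> 1 + x^2\<close> by (rule mult_right_mono[rotated])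
      then show ?thesis using nn[of x] by (simp add: abs_mult algebra_simps)
    qed
    then show "AE x in lborel. norm (x * f x) \<le> norm (f x + x^2 * f x)" by simp
  qed
  have ip: "integrable lborel (\<lambda>x. indicator {0..} x * f x)" using ind_int[OF i0] .
  have iA: "integrable lborel (\<lambda>x. indicator {0..} x * (x * f x))" using ind_int[OF i1] .
  have iS: "integrable lborel (\<lambda>x. indicator {0..} x * (x^2 * f x))" using ind_int[OF i2] .
  have p0: "0 \<le> p" unfolding p_def using nn by (intro integral_nonneg_AE) (auto simp: indicator_def)
  have A0: "0 \<le> A" unfolding A_def using nn by (intro integral_nonneg_AE) (auto simp: indicator_def)
  have S0: "0 \<le> S" unfolding S_def using nn by (intro integral_nonneg_AE) (auto simp: indicator_def)
  define m where "m = f 0"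
  have m: "0 < m" using m0 by (simp add: m_def)
  have ipnn: "AE x in lborel. 0 \<le> indicator {0..} x * f x" using nn by (auto simp: indicator_def)
  have iAnn: "AE x in lborel. 0 \<le> indicator {0..} x * (x * f x)" using nn by (auto simp: indicator_def)
  have partA: "f 0 * A \<le> p^2 \<and> (f 0)^2 * S \<le> 2 * p^3"
  proof (cases "p = 0")
    case True
    have ae: "AE x in lborel. indicator {0..} x * f x = 0"
      using integral_nonneg_eq_0_iff_AE[OF ip ipnn] True unfolding p_def by simp
    have "A = 0" unfolding A_def
      by (rule integral_eq_zero_AE) (use ae in \<open>eventually_elim, auto simp: indicator_def\<close>)
    moreover have "S = 0" unfolding S_def
      by (rule integral_eq_zero_AE) (use ae in \<open>eventually_elim, auto simp: indicator_def\<close>)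
    ultimately show ?thesis using True by simp
  next
    case False
    then have pp: "0 < p" using p0 by simp
    define l where "l = m / p"
    have l: "0 < l" using m pp by (simp add: l_def)
    define E where "E i = (\<lambda>x. indicator {0..} x * (x^i * (m * exp (- l * x))))" for i :: nat
    have hb: "has_bochner_integral lborel (E i) (m * fact i / l ^ Suc i)" for i
      unfolding E_def by (rule exp_moment) (use l m in auto)
    have iE: "integrable lborel (E i)" for i using hb by (auto simp: has_bochner_integral_iff)
    have vE: "integral\<^sup>L lborel (E i) = m * fact i / l ^ Suc i" for i
      using hb by (simp add: has_bochner_integral_iff)
    define w where "w x = indicator {0..} x * (f x - m * exp (- l * x))" for x
    have w0: "w = (\<lambda>x. indicator {0..} x * f x - E 0 x)"
      by (auto simp: w_def E_def fun_eq_iff algebra_simps)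
    have w1: "(\<lambda>t. t * w t) = (\<lambda>x. indicator {0..} x * (x * f x) - E 1 x)"
      by (auto simp: w_def E_def fun_eq_iff algebra_simps)
    have w2: "(\<lambda>t. t^2 * w t) = (\<lambda>x. indicator {0..} x * (x^2 * f x) - E 2 x)"
      by (auto simp: w_def E_def fun_eq_iff algebra_simps)
    have iw: "integrable lborel w" unfolding w0 using ip iE by simp
    have iw1: "integrable lborel (\<lambda>t. t * w t)" unfolding w1 using iA iE by simp
    have iw2: "integrable lborel (\<lambda>t. t^2 * w t)" unfolding w2 using iS iE by simp
    have e0: "m * fact 0 / l ^ Suc 0 = p" using m pp by (simp add: l_def)
    have e1: "m * fact 1 / l ^ Suc 1 = p^2 / m" using m pp by (simp add: l_def field_simps power2_eq_square)
    have e2: "m * fact 2 / l ^ Suc 2 = 2 * p^3 / m^2" using m pp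
      by (simp add: l_def field_simps power2_eq_square power3_eq_cube)
    have int0: "integral\<^sup>L lborel w = 0" unfolding w0 using ip iE vE[of 0] e0
      by (simp add: p_def)
    have zero: "w t = 0" if "t \<le> 0" for t
      using that by (cases "t = 0") (auto simp: w_def m_def indicator_def)
    have down: "0 < w y" if y: "0 < y" "y \<le> x" and wx: "0 < w x" for x y
    proof -
      have x0: "0 \<le> x" and fx: "m * exp (- l * x) < f x"
        using wx by (cases "0 \<le> x"; simp add: w_def)+
      have fxp: "0 < f x" using fx m by (smt (verit) exp_gt_zero mult_pos_pos)
      have lz: "ln m + - l * x < ln (f x)" using exp_ln_cmp(1)[OF m fxp, of "- l" x] fx by simp
      have "0 < f y \<and> ln m + - l * y < ln (f y)"
        by (rule lc_between[OF cvx cc y m0 fxp]) (use lz in \<open>auto simp: m_def\<close>)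
      then have "m * exp (- l * y) < f y" using exp_ln_cmp(1)[OF m, of "f y" "- l" y] by simp
      then show ?thesis using y by (simp add: w_def)
    qed
    have "integral\<^sup>L lborel (\<lambda>t. t * w t) \<le> 0"
      by (rule mono_cross[OF iw iw1 zero int0 down]) auto
    then have "A \<le> p^2 / m" unfolding w1 using iA iE vE[of 1] e1 by (simp add: A_def)
    then have a1: "f 0 * A \<le> p^2" using m by (simp add: m_def field_simps)
    have "integral\<^sup>L lborel (\<lambda>t. t^2 * w t) \<le> 0"
      by (rule mono_cross[OF iw iw2 zero int0 down]) (auto intro: power_mono)
    then have "S \<le> 2 * p^3 / m^2" unfolding w2 using iS iE vE[of 2] e2 by (simp add: S_def)
    then have "(f 0)^2 * S \<le> 2 * p^3" using m by (simp add: m_def field_simps)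
    with a1 show ?thesis by simp
  qed
  have partB: "p * S \<le> 2 * A^2"
  proof (cases "A = 0")
    case True
    have ae: "AE x in lborel. indicator {0..} x * (x * f x) = 0"
      using integral_nonneg_eq_0_iff_AE[OF iA iAnn] True unfolding A_def by simp
    have "S = 0" unfolding S_def
    proof (rule integral_eq_zero_AE)
      show "AE x in lborel. indicator {0..} x * (x^2 * f x) = 0"
        using ae
      proof eventually_elim
        case (elim x)
        have "indicator {0..} x * (x^2 * f x) = x * (indicator {0..} x * (x * f x))"
          by (simp add: power2_eq_square algebra_simps)
        then show ?case using elim by simp
      qed
    qed
    then show ?thesis using True by simp
  next
    case False
    then have AA: "0 < A" using A0 by simp
    have pp: "0 < p"
    proof (rule ccontr)
      assume "\<not> 0 < p"
      then have True: "p = 0" using p0 by simp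
      have ae: "AE x in lborel. indicator {0..} x * f x = 0"
        using integral_nonneg_eq_0_iff_AE[OF ip ipnn] True unfolding p_def by simp
      have "A = 0" unfolding A_def
        by (rule integral_eq_zero_AE) (use ae in \<open>eventually_elim, auto simp: indicator_def\<close>)
      then show False using AA by simp
    qed
    define l where "l = p / A"
    define C where "C = p^2 / A"
    have l: "0 < l" using AA pp by (simp add: l_def)
    have C: "0 < C" using AA pp by (simp add: C_def)
    define E where "E i = (\<lambda>x. indicator {0..} x * (x^i * (C * exp (- l * x))))" for i :: nat
    have hb: "has_bochner_integral lborel (E i) (C * fact i / l ^ Suc i)" for i
      unfolding E_def by (rule exp_moment) (use l C in auto)
    have iE: "integrable lborel (E i)" for i using hb by (auto simp: has_bochner_integral_iff)
    have vE: "integral\<^sup>L lborel (E i) = C * fact i / l ^ Suc i" for i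
      using hb by (simp add: has_bochner_integral_iff)
    define w where "w x = indicator {0..} x * (f x - C * exp (- l * x))" for x
    have w0: "w = (\<lambda>x. indicator {0..} x * f x - E 0 x)"
      by (auto simp: w_def E_def fun_eq_iff algebra_simps)
    have w1: "(\<lambda>t. t * w t) = (\<lambda>x. indicator {0..} x * (x * f x) - E 1 x)"
      by (auto simp: w_def E_def fun_eq_iff algebra_simps)
    have w2: "(\<lambda>t. t^2 * w t) = (\<lambda>x. indicator {0..} x * (x^2 * f x) - E 2 x)"
      by (auto simp: w_def E_def fun_eq_iff algebra_simps)
    have iw: "integrable lborel w" unfolding w0 using ip iE by simp
    have iw1: "integrable lborel (\<lambda>t. t * w t)" unfolding w1 using iA iE by simp
    have iw2: "integrable lborel (\<lambda>t. t^2 * w t)" unfolding w2 using iS iE by simp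
    have e0: "C * fact 0 / l ^ Suc 0 = p" using AA pp by (simp add: l_def C_def power2_eq_square)
    have e1: "C * fact 1 / l ^ Suc 1 = A" using AA pp by (simp add: l_def C_def field_simps power2_eq_square)
    have e2: "C * fact 2 / l ^ Suc 2 = 2 * A^2 / p" using AA pp
      by (simp add: l_def C_def field_simps power2_eq_square power3_eq_cube)
    have int0: "integral\<^sup>L lborel w = 0" unfolding w0 using ip iE vE[of 0] e0
      by (simp add: p_def)
    have int1: "integral\<^sup>L lborel (\<lambda>t. t * w t) = 0" unfolding w1 using iA iE vE[of 1] e1
      by (simp add: A_def)
    have zero: "w t = 0" if "t < 0" for t
      using that by (simp add: w_def)
    have conv: "0 < w y" if xyz: "x \<le> y" "y \<le> z" and wx: "0 < w x" and wz: "0 < w z" for x y z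
    proof (cases "x = y")
      case True then show ?thesis using wx by simp
    next
      case False
      have x0: "0 \<le> x" and fx: "C * exp (- l * x) < f x"
        using wx by (cases "0 \<le> x"; simp add: w_def)+
      have fz: "C * exp (- l * z) < f z"
        using wz by (cases "0 \<le> z"; simp add: w_def)+
      have fxp: "0 < f x" using fx C by (smt (verit) exp_gt_zero mult_pos_pos)
      have fzp: "0 < f z" using fz C by (smt (verit) exp_gt_zero mult_pos_pos)
      have lx: "ln C + - l * x \<le> ln (f x)" using exp_ln_cmp(1)[OF C fxp, of "- l" x] fx by simp
      have lz: "ln C + - l * z < ln (f z)" using exp_ln_cmp(1)[OF C fzp, of "- l" z] fz by simp
      have "0 < f y \<and> ln C + - l * y < ln (f y)"
        by (rule lc_between[OF cvx cc _ xyz(2) fxp fzp lx lz]) (use False xyz in simp)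
      then have "C * exp (- l * y) < f y" using exp_ln_cmp(1)[OF C, of "f y" "- l" y] by simp
      then show ?thesis using x0 xyz by (simp add: w_def)
    qed
    have "integral\<^sup>L lborel (\<lambda>t. t^2 * w t) \<le> 0"
      by (rule quad_cross[OF iw iw1 iw2 zero int0 int1 conv])
    then have "S \<le> 2 * A^2 / p" unfolding w2 using iS iE vE[of 2] e2 by (simp add: S_def)
    then show ?thesis using pp by (simp add: field_simps)
  qed
  show ?thesis using partA partB p0 A0 by simp
qed

lemma final_alg_core:
  fixes p q a b U V :: real
  assumes p: "0 < p" and q: "0 < q" and pq: "p + q = 1" and a: "0 \<le> a" "a \<le> p^2"
    and b: "0 \<le> b" "b \<le> q^2" and U: "p * U \<le> 2 * a^2" and V: "q * V \<le> 2 * b^2"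
  shows "U + V - (a - b)^2 \<le> 1"
proof -
  have U': "U \<le> 2 * a^2 / p" using U p by (simp add: field_simps)
  have V': "V \<le> 2 * b^2 / q" using V q by (simp add: field_simps)
  have c1: "0 \<le> 2 / p - 1" using p pq q by (simp add: field_simps)
  have c2: "0 \<le> 2 / q - 1" using p pq q by (simp add: field_simps)
  have "U + V - (a - b)^2 \<le> a^2 * (2 / p - 1) + b^2 * (2 / q - 1) + 2 * (a * b)"
    using U' V' by (simp add: power2_eq_square field_simps)
  also have "\<dots> \<le> (p^2)^2 * (2 / p - 1) + (q^2)^2 * (2 / q - 1) + 2 * (p^2 * q^2)"
  proof -
    have "a^2 \<le> (p^2)^2" using a by (intro power_mono) auto
    then have 1: "a^2 * (2 / p - 1) \<le> (p^2)^2 * (2 / p - 1)" using c1 by (rule mult_right_mono)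
    have "b^2 \<le> (q^2)^2" using b by (intro power_mono) auto
    then have 2: "b^2 * (2 / q - 1) \<le> (q^2)^2 * (2 / q - 1)" using c2 by (rule mult_right_mono)
    have 3: "a * b \<le> p^2 * q^2" using a b by (intro mult_mono) auto
    show ?thesis using 1 2 3 by linarith
  qed
  also have "\<dots> = 2 * p^3 - p^4 + 2 * q^3 - q^4 + 2 * p^2 * q^2"
    using p q by (simp add: field_simps power2_eq_square power3_eq_cube power4_eq_xxxx)
  also have "\<dots> = 1 - 2 * p * q"
  proof -
    have qq: "q = 1 - p" using pq by simp
    show ?thesis unfolding qq by (simp add: algebra_simps power2_eq_square power3_eq_cube power4_eq_xxxx)
  qed
  also have "\<dots> \<le> 1" using p q by simp
  finally show ?thesis .
qed

lemma final_alg: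
  fixes m p q A B S T :: real
  assumes p: "0 \<le> p" and q: "0 \<le> q" and pq: "p + q = 1" and A: "0 \<le> A" and B: "0 \<le> B"
    and m: "0 < m" and mA: "m * A \<le> p^2" and mB: "m * B \<le> q^2"
    and mS: "m^2 * S \<le> 2 * p^3" and mT: "m^2 * T \<le> 2 * q^3"
    and pS: "p * S \<le> 2 * A^2" and qT: "q * T \<le> 2 * B^2"
    and var: "S + T - (A - B)^2 = 1"
  shows "m \<le> 1"
proof -
  define a where "a = m * A"
  define b where "b = m * B"
  define U where "U = m^2 * S"
  define V where "V = m^2 * T"
  have a0: "0 \<le> a" "a \<le> p^2" using A m mA by (auto simp: a_def)
  have b0: "0 \<le> b" "b \<le> q^2" using B m mB by (auto simp: b_def)
  have pU: "p * U \<le> 2 * a^2"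
  proof -
    have "m^2 * (p * S) \<le> m^2 * (2 * A^2)" using pS by (intro mult_left_mono) auto
    then show ?thesis by (simp add: U_def a_def power2_eq_square algebra_simps)
  qed
  have qV: "q * V \<le> 2 * b^2"
  proof -
    have "m^2 * (q * T) \<le> m^2 * (2 * B^2)" using qT by (intro mult_left_mono) auto
    then show ?thesis by (simp add: V_def b_def power2_eq_square algebra_simps)
  qed
  have eq: "m^2 = U + V - (a - b)^2"
  proof -
    have "m^2 = m^2 * (S + T - (A - B)^2)" using var by simp
    then show ?thesis by (simp add: U_def V_def a_def b_def power2_eq_square algebra_simps)
  qed
  have "U + V - (a - b)^2 \<le> 1"
  proof (cases "p = 0")
    case True
    then have q1: "q = 1" using pq by simp
    have "a = 0" using a0 True by simp
    have "U \<le> 0" using mS True by (simp add: U_def)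
    have "V \<le> 2 * b^2" using qV q1 by simp
    have "b^2 \<le> 1" using b0 q1 by (simp add: abs_le_square_iff power_le_one)
    show ?thesis using \<open>a = 0\<close> \<open>U \<le> 0\<close> \<open>V \<le> 2 * b^2\<close> \<open>b^2 \<le> 1\<close> by simp
  next
    case False
    show ?thesis
    proof (cases "q = 0")
      case True
      then have p1: "p = 1" using pq by simp
      have "b = 0" using b0 True by simp
      have "V \<le> 0" using mT True by (simp add: V_def)
      have "U \<le> 2 * a^2" using pU p1 by simp
      have "a^2 \<le> 1" using a0 p1 by (simp add: power_le_one)
      show ?thesis using \<open>b = 0\<close> \<open>V \<le> 0\<close> \<open>U \<le> 2 * a^2\<close> \<open>a^2 \<le> 1\<close> by simp
    next
      case False
      show ?thesis
        by (rule final_alg_core) (use p q \<open>p \<noteq> 0\<close> False pq a0 b0 pU qV in auto)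
    qed
  qed
  then have "m^2 \<le> 1" using eq by simp
  then show ?thesis using m by (simp add: power_le_one_iff abs_le_square_iff)
qed

lemma lcd_affine:
  assumes lc: "log_concave_density g"
  shows "log_concave_density (\<lambda>t. g (a + b * t))"
proof -
  have gm: "g \<in> borel_measurable borel" and nn: "\<And>x. 0 \<le> g x"
    and cvx: "convex {x. 0 < g x}" and cc: "concave_on {x. 0 < g x} (\<lambda>x. ln (g x))"
    using lc unfolding log_concave_density_def by auto
  have aff: "a + b * (u * x + v * y) = u * (a + b * x) + v * (a + b * y)" if "u + v = 1" for u v x y :: real
  proof -
    have "a = (u + v) * a" using that by simp
    then show ?thesis by (simp add: algebra_simps)
  qed
  have m: "(\<lambda>t. g (a + b * t)) \<in> borel_measurable lborel" using gm by measurable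
  have c1: "convex {t. 0 < g (a + b * t)}"
    unfolding convex_def
  proof safe
    fix x y u v :: real assume xy: "0 < g (a + b * x)" "0 < g (a + b * y)" "0 \<le> u" "0 \<le> v" "u + v = 1"
    have "u *\<^sub>R (a + b * x) + v *\<^sub>R (a + b * y) \<in> {x. 0 < g x}"
      using xy by (intro convexD[OF cvx]) auto
    then show "0 < g (a + b * (u *\<^sub>R x + v *\<^sub>R y))" using aff[OF xy(5)] by simp
  qed
  have c2: "concave_on {t. 0 < g (a + b * t)} (\<lambda>t. ln (g (a + b * t)))"
    unfolding concave_on_def convex_on_def
  proof (intro conjI c1 ballI allI impI)
    fix x y u v :: real assume x: "x \<in> {t. 0 < g (a + b * t)}" and y: "y \<in> {t. 0 < g (a + b * t)}"
      and uv: "0 \<le> u" "0 \<le> v" "u + v = 1"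
    have "- ln (g (u *\<^sub>R (a + b * x) + v *\<^sub>R (a + b * y))) \<le> u * - ln (g (a + b * x)) + v * - ln (g (a + b * y))"
      using cc x y uv unfolding concave_on_def convex_on_def by auto
    then show "- ln (g (a + b * (u *\<^sub>R x + v *\<^sub>R y))) \<le> u * - ln (g (a + b * x)) + v * - ln (g (a + b * y))"
      using aff[OF uv(3)] by simp
  qed
  show ?thesis unfolding log_concave_density_def using m nn c1 c2 by auto
qed

lemma split_int:
  fixes F :: "real \<Rightarrow> real"
  assumes F: "integrable lborel F"
  shows "integral\<^sup>L lborel F = (\<integral>x. indicator {0..} x * F x \<partial>lborel) + (\<integral>x. indicator {0..} x * F (- x) \<partial>lborel)"
proof -
  have [measurable]: "F \<in> borel_measurable lborel" using F by auto
  have i1: "integrable lborel (\<lambda>x. indicator {0..} x * F x)" using ind_int[OF F] .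
  have i2: "integrable lborel (\<lambda>x. indicator {..0} x * F x)"
    using integrable_mult_indicator[of "{..0}" lborel F] F by simp
  have "AE x in lborel. F x = indicator {0..} x * F x + indicator {..0} x * F x"
    using AE_lborel_singleton[of 0] by eventually_elim (auto simp: indicator_def)
  then have "integral\<^sup>L lborel F = integral\<^sup>L lborel (\<lambda>x. indicator {0..} x * F x + indicator {..0} x * F x)"
    by (intro integral_cong_AE) auto
  also have "\<dots> = (\<integral>x. indicator {0..} x * F x \<partial>lborel) + (\<integral>x. indicator {..0} x * F x \<partial>lborel)"
    using i1 i2 by simp
  also have "(\<integral>x. indicator {..0} x * F x \<partial>lborel) = (\<integral>x. indicator {0..} x * F (- x) \<partial>lborel)"
  proof -
    have "(\<integral>x. indicator {..0} x * F x \<partial>lborel) = \<bar>-1\<bar> *\<^sub>R (\<integral>x. indicator {..0} (0 + -1 * x) * F (0 + -1 * x) \<partial>lborel)"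
      by (rule lborel_integral_real_affine) simp
    also have "(\<lambda>x::real. indicator {..0} (0 + -1 * x) * F (0 + -1 * x)) = (\<lambda>x. indicator {0..} x * F (- x))"
      by (auto simp: indicator_def fun_eq_iff)
    finally show ?thesis by simp
  qed
  finally show ?thesis .
qed

lemma dens_le_1:
  fixes g :: "real \<Rightarrow> real"
  assumes lc: "log_concave_density g"
    and prob: "prob_space (density lborel (\<lambda>x. ennreal (g x)))"
    and var: "prob_space.variance (density lborel (\<lambda>x. ennreal (g x))) (\<lambda>x. x) = 1"
  shows "g x0 \<le> 1"
proof (cases "g x0 \<le> 0")
  case True then show ?thesis by simp
next
  case False
  then have m: "0 < g x0" by simp
  have gm[measurable]: "g \<in> borel_measurable lborel" and nn: "\<And>x. 0 \<le> g x"
    using lc unfolding log_concave_density_def by auto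
  define M where "M = density lborel (\<lambda>x. ennreal (g x))"
  interpret prob_space M using prob by (simp add: M_def)
  have sM: "sets M = sets lborel" by (simp add: M_def)
  have intM: "integral\<^sup>L M F = (\<integral>x. g x * F x \<partial>lborel)" if [measurable]: "F \<in> borel_measurable lborel" for F :: "real \<Rightarrow> real"
    unfolding M_def by (subst integral_density) (auto simp: nn)
  have intgM: "integrable M F \<longleftrightarrow> integrable lborel (\<lambda>x. g x * F x)" if [measurable]: "F \<in> borel_measurable lborel" for F :: "real \<Rightarrow> real"
    unfolding M_def by (subst integrable_density) (auto simp: nn)
  define E where "E = expectation (\<lambda>x. x)"
  have var': "variance (\<lambda>x. x) = 1" using var by (simp add: M_def)
  have iv: "integrable M (\<lambda>x. (x - E)^2)"
  proof (rule ccontr)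
    assume "\<not> integrable M (\<lambda>x. (x - E)^2)"
    then have "variance (\<lambda>x. x) = 0" unfolding E_def by (simp add: not_integrable_integral_eq)
    then show False using var' by simp
  qed
  have mM: "(\<lambda>x::real. x) \<in> borel_measurable M" unfolding M_def by simp
  have i2: "integrable M (\<lambda>x. x^2)"
  proof (rule Bochner_Integration.integrable_bound)
    show "integrable M (\<lambda>x. 2 * (x - E)^2 + 2 * E^2)" using iv by simp
    show "(\<lambda>x::real. x^2) \<in> borel_measurable M" using mM by measurable
    have "x^2 \<le> 2 * (x - E)^2 + 2 * E^2" for x :: real
    proof -
      have "0 \<le> (x - 2 * E)^2" by simp
      then show ?thesis by (simp add: power2_eq_square algebra_simps)
    qed
    then show "AE x in M. norm (x^2) \<le> norm (2 * (x - E)^2 + 2 * E^2)"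
    proof (intro AE_I2)
      fix x :: real
      have "0 \<le> x^2" by simp
      moreover have "0 \<le> 2 * (x - E)^2 + 2 * E^2" by simp
      ultimately show "norm (x^2) \<le> norm (2 * (x - E)^2 + 2 * E^2)"
        using \<open>x^2 \<le> 2 * (x - E)^2 + 2 * E^2\<close> by simp
    qed
  qed
  have i1: "integrable M (\<lambda>x. x)"
  proof (rule Bochner_Integration.integrable_bound)
    show "integrable M (\<lambda>x. 1 + x^2)" using i2 by simp
    show "(\<lambda>x::real. x) \<in> borel_measurable M" using mM .
    have "\<bar>x\<bar> \<le> 1 + x^2" for x :: real
    proof -
      have "0 \<le> (\<bar>x\<bar> - 1)^2" by simp
      moreover have "(\<bar>x\<bar> - 1)^2 = x^2 - 2*\<bar>x\<bar> + 1"
        by (simp add: power2_eq_square algebra_simps abs_mult_self_eq)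
      ultimately show ?thesis by linarith
    qed
    then show "AE x in M. norm x \<le> norm (1 + x^2)"
    proof (intro AE_I2)
      fix x :: real
      have "0 \<le> 1 + x^2" by (smt (verit) zero_le_power2)
      then show "norm x \<le> norm (1 + x^2)" using \<open>\<bar>x\<bar> \<le> 1 + x^2\<close> by simp
    qed
  qed
  have iY: "integrable M (\<lambda>x. x - x0)" using i1 by simp
  have iY2: "integrable M (\<lambda>x. (x - x0)^2)"
  proof -
    have "(\<lambda>x. (x - x0)^2) = (\<lambda>x. x^2 - 2 * x0 * x + x0^2)"
      by (auto simp: fun_eq_iff power2_eq_square algebra_simps)
    then show ?thesis using i1 i2 by simp
  qed
  have EY: "expectation (\<lambda>x. x - x0) = E - x0"
    using i1 by (simp add: E_def Bochner_Integration.integral_diff[OF i1] prob_space)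
  have "variance (\<lambda>x. x - x0) = variance (\<lambda>x. x)"
    by (simp add: EY E_def)
  then have V1: "expectation (\<lambda>x. (x - x0)^2) - (expectation (\<lambda>x. x - x0))^2 = 1"
    using variance_eq[OF iY iY2] var' by simp
  have P1: "expectation (\<lambda>x. 1::real) = 1" by (simp add: prob_space)
  define h where "h t = g (x0 + t)" for t
  define h' where "h' t = g (x0 - t)" for t
  have shift: "(\<integral>x. g x * (x - x0)^k \<partial>lborel) = (\<integral>t. t^k * h t \<partial>lborel)" for k :: nat
  proof -
    have "(\<integral>x. g x * (x - x0)^k \<partial>lborel) = \<bar>1\<bar> *\<^sub>R (\<integral>x. g (x0 + 1 * x) * (x0 + 1 * x - x0)^k \<partial>lborel)"
      by (rule lborel_integral_real_affine) simp
    then show ?thesis by (simp add: h_def mult.commute)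
  qed
  have lint: "integrable lborel (\<lambda>t. t^k * h t)" if "integrable M (\<lambda>x. (x - x0)^k)" for k :: nat
  proof -
    have "integrable lborel (\<lambda>x. g x * (x - x0)^k)" using that by (subst intgM[symmetric]) auto
    from lborel_integrable_real_affine[OF this, of 1 x0]
    show ?thesis by (simp add: h_def mult.commute)
  qed
  have ih0: "integrable lborel h" using lint[of 0] by (simp add: P1)
  have ih1: "integrable lborel (\<lambda>t. t * h t)" using lint[of 1] iY by simp
  have ih2: "integrable lborel (\<lambda>t. t^2 * h t)" using lint[of 2] iY2 by simp
  have vh0: "integral\<^sup>L lborel h = 1" using P1 intM[of "\<lambda>x. 1"] shift[of 0] by simp
  have vh1: "integral\<^sup>L lborel (\<lambda>t. t * h t) = expectation (\<lambda>x. x - x0)"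
    using intM[of "\<lambda>x. x - x0"] shift[of 1] by simp
  have vh2: "integral\<^sup>L lborel (\<lambda>t. t^2 * h t) = expectation (\<lambda>x. (x - x0)^2)"
    using intM[of "\<lambda>x. (x - x0)^2"] shift[of 2] by simp
  have h'fun: "h' = (\<lambda>t. g (x0 - t))" by (simp add: fun_eq_iff h'_def)
  have ih'0: "integrable lborel h'" unfolding h'fun
    using lborel_integrable_real_affine[OF ih0, of "-1" 0] by (simp add: h_def h'_def)
  have ih'2: "integrable lborel (\<lambda>t. t^2 * h' t)"
    using lborel_integrable_real_affine[OF ih2, of "-1" 0] by (simp add: h_def h'_def)
  have hfun: "h = (\<lambda>t. g (x0 + t))" by (simp add: fun_eq_iff h_def)
  have lch: "log_concave_density h" using lcd_affine[OF lc, of x0 1] by (simp add: hfun)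
  have lch': "log_concave_density h'" using lcd_affine[OF lc, of x0 "-1"] by (simp add: h'fun)
  have hb: "0 \<le> p \<and> 0 \<le> A \<and> h 0 * A \<le> p^2 \<and> (h 0)^2 * S \<le> 2 * p^3 \<and> p * S \<le> 2 * A^2"
    if "log_concave_density f" "f = h \<or> f = h'" "integrable lborel f" "integrable lborel (\<lambda>x. x^2 * f x)"
      and "p = (\<integral>x. indicator {0..} x * f x \<partial>lborel)"
      and "A = (\<integral>x. indicator {0..} x * (x * f x) \<partial>lborel)"
      and "S = (\<integral>x. indicator {0..} x * (x^2 * f x) \<partial>lborel)" for f p A S
  proof -
    have f0: "f 0 = h 0" using that(2) by (auto simp: h_def h'_def)
    have "0 < f 0" using f0 m by (simp add: h_def)
    from half_bounds[of f] this that show ?thesis unfolding log_concave_density_def f0[symmetric]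
      by (auto simp: measurable_lborel1)
  qed
  define p where "p = (\<integral>x. indicator {0..} x * h x \<partial>lborel)"
  define A where "A = (\<integral>x. indicator {0..} x * (x * h x) \<partial>lborel)"
  define S where "S = (\<integral>x. indicator {0..} x * (x^2 * h x) \<partial>lborel)"
  define q where "q = (\<integral>x. indicator {0..} x * h' x \<partial>lborel)"
  define B where "B = (\<integral>x. indicator {0..} x * (x * h' x) \<partial>lborel)"
  define T where "T = (\<integral>x. indicator {0..} x * (x^2 * h' x) \<partial>lborel)"
  have H: "0 \<le> p \<and> 0 \<le> A \<and> h 0 * A \<le> p^2 \<and> (h 0)^2 * S \<le> 2 * p^3 \<and> p * S \<le> 2 * A^2"
    by (rule hb[OF lch _ ih0 ih2 p_def A_def S_def]) simp
  have H': "0 \<le> q \<and> 0 \<le> B \<and> h 0 * B \<le> q^2 \<and> (h 0)^2 * T \<le> 2 * q^3 \<and> q * T \<le> 2 * B^2"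
    by (rule hb[OF lch' _ ih'0 ih'2 q_def B_def T_def]) simp
  have s0: "p + q = 1"
    using split_int[OF ih0] vh0 by (simp add: p_def q_def h_def h'_def)
  have s1: "A - B = expectation (\<lambda>x. x - x0)"
    using split_int[OF ih1] vh1 by (simp add: A_def B_def h_def h'_def)
  have s2: "S + T = expectation (\<lambda>x. (x - x0)^2)"
    using split_int[OF ih2] vh2 by (simp add: S_def T_def h_def h'_def)
  have "h 0 \<le> 1"
    by (rule final_alg[of p q A B "h 0" S T]) (use H H' s0 s1 s2 V1 m in \<open>auto simp: h_def\<close>)
  then show ?thesis by (simp add: h_def)
qed

lemma vec_lambda_measurable:
  "(\<lambda>f. vec_lambda f :: real ^ 'n::finite) \<in> measurable (PiM UNIV M) borel"
  if "\<And>k. sets (M k) = sets borel"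
proof -
  have "(\<lambda>f. (vec_lambda f :: real ^ 'n) \<bullet> i) \<in> borel_measurable (PiM UNIV M)" if "i \<in> Basis" for i
  proof -
    obtain k where i: "i = axis k 1" using \<open>i \<in> Basis\<close> by (auto simp: Basis_vec_def)
    have "(\<lambda>f. f k) \<in> measurable (PiM UNIV M) (M k)" by (rule measurable_component_singleton) simp
    then have "(\<lambda>f. f k) \<in> borel_measurable (PiM UNIV M)"
      using measurable_cong_sets[OF refl \<open>sets (M k) = sets borel\<close>] by blast
    then show ?thesis by (simp add: i inner_axis)
  qed
  then show ?thesis by (subst borel_measurable_euclidean_space) blast
qed

lemma prod_slice_bound:
  fixes M :: "'n::finite \<Rightarrow> real measure"
  assumes P: "\<And>k. prob_space (M k)" and X: "X \<in> sets (PiM UNIV M)"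
    and bnd: "\<And>x. (\<integral>\<^sup>+y. indicator X (x(k := y)) \<partial>M k) \<le> r"
  shows "emeasure (PiM UNIV M) X \<le> r"
proof -
  interpret product_sigma_finite M
    unfolding product_sigma_finite_def using P by (simp add: prob_space_imp_sigma_finite)
  interpret PI: prob_space "PiM (UNIV - {k}) M" by (rule prob_space_PiM) (use P in auto)
  have ins: "insert k (UNIV - {k}) = UNIV" by auto
  have "emeasure (PiM UNIV M) X = (\<integral>\<^sup>+x. indicator X x \<partial>PiM UNIV M)"
    using X by simp
  also have "\<dots> = (\<integral>\<^sup>+ x. (\<integral>\<^sup>+ y. indicator X (x(k := y)) \<partial>(M k)) \<partial>(PiM (UNIV - {k}) M))"
    using product_nn_integral_insert[of "UNIV - {k}" k "indicator X"] X by (simp add: ins)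
  also have "\<dots> \<le> (\<integral>\<^sup>+ x. r \<partial>(PiM (UNIV - {k}) M))"
    by (intro nn_integral_mono bnd)
  also have "\<dots> = r" by (simp add: PI.emeasure_space_1)
  finally show ?thesis .
qed

lemma dens_interval:
  fixes g :: "real \<Rightarrow> real"
  assumes gm: "g \<in> borel_measurable lborel" and le1: "\<And>x. g x \<le> 1" and e: "0 \<le> e"
  shows "emeasure (density lborel (\<lambda>x. ennreal (g x))) {c - e .. c} \<le> ennreal e"
proof -
  have "emeasure (density lborel (\<lambda>x. ennreal (g x))) {c - e .. c} = (\<integral>\<^sup>+x. ennreal (g x) * indicator {c - e .. c} x \<partial>lborel)"
    using gm by (subst emeasure_density) auto
  also have "\<dots> \<le> (\<integral>\<^sup>+x. indicator {c - e .. c} x \<partial>lborel)"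
    by (intro nn_integral_mono) (auto simp: indicator_def le1 ennreal_le_1)
  also have "\<dots> = ennreal e" using e by simp
  finally show ?thesis .
qed

lemma slice1d:
  fixes g :: "real \<Rightarrow> real"
  assumes gm: "g \<in> borel_measurable lborel" and le1: "\<And>x. g x \<le> 1"
    and C: "convex C" and e: "0 \<le> e"
    and X: "X \<subseteq> {y. \<exists>s\<in>C. \<bar>s - y\<bar> \<le> e} - C"
  shows "(\<integral>\<^sup>+y. indicator X y \<partial>density lborel (\<lambda>x. ennreal (g x))) \<le> ennreal (2 * e)"
proof -
  define D where "D = density lborel (\<lambda>x. ennreal (g x))"
  define I1 where "I1 = (if C \<noteq> {} \<and> bdd_below C then {Inf C - e .. Inf C} else {})"
  define I2 where "I2 = (if C \<noteq> {} \<and> bdd_above C then {Sup C + e - e .. Sup C + e} else {})"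
  have iv: "\<And>a b x. a \<in> C \<Longrightarrow> b \<in> C \<Longrightarrow> a \<le> x \<Longrightarrow> x \<le> b \<Longrightarrow> x \<in> C"
    using C unfolding is_interval_convex_1[symmetric] is_interval_1 by blast
  have sub: "X \<subseteq> I1 \<union> I2"
  proof
    fix y assume "y \<in> X"
    then obtain s where s: "s \<in> C" "\<bar>s - y\<bar> \<le> e" and yC: "y \<notin> C" using X by auto
    have Cne: "C \<noteq> {}" using s by auto
    show "y \<in> I1 \<union> I2"
    proof (cases "y < s")
      case True
      have lt: "y < c" if "c \<in> C" for c
      proof (rule ccontr)
        assume "\<not> y < c"
        then have "y \<in> C" using iv[OF that s(1), of y] True by auto
        then show False using yC by simp
      qed
      then have bb: "bdd_below C" unfolding bdd_below_def by (meson less_imp_le)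
      have "y \<le> Inf C" using Cne lt by (intro cInf_greatest) (auto intro: less_imp_le)
      moreover have "Inf C \<le> s" using bb s(1) by (rule cInf_lower[rotated])
      ultimately have "y \<in> I1" using s True Cne bb by (auto simp: I1_def)
      then show ?thesis by simp
    next
      case False
      then have True': "s < y" using s yC by (cases "s = y") auto
      have lt: "c < y" if "c \<in> C" for c
      proof (rule ccontr)
        assume "\<not> c < y"
        then have "y \<in> C" using iv[OF s(1) that, of y] True' by auto
        then show False using yC by simp
      qed
      then have bb: "bdd_above C" unfolding bdd_above_def by (meson less_imp_le)
      have "Sup C \<le> y" using Cne lt by (intro cSup_least) (auto intro: less_imp_le)
      moreover have "s \<le> Sup C" using bb s(1) by (rule cSup_upper[rotated])
      ultimately have "y \<in> I2" using s True' Cne bb by (auto simp: I2_def)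
      then show ?thesis by simp
    qed
  qed
  have m1: "emeasure D I1 \<le> ennreal e"
    unfolding I1_def D_def using dens_interval[OF gm le1 e] by auto
  have m2: "emeasure D I2 \<le> ennreal e"
    unfolding I2_def D_def using dens_interval[OF gm le1 e, of "Sup C + e"] by auto
  have "(\<integral>\<^sup>+y. indicator X y \<partial>D) \<le> (\<integral>\<^sup>+y. indicator (I1 \<union> I2) y \<partial>D)"
    using sub by (intro nn_integral_mono) (auto simp: indicator_def)
  also have "\<dots> = emeasure D (I1 \<union> I2)"
    by (rule nn_integral_indicator) (auto simp: D_def I1_def I2_def)
  also have "\<dots> \<le> emeasure D I1 + emeasure D I2"
    by (rule emeasure_subadditive) (auto simp: D_def I1_def I2_def)
  also have "\<dots> \<le> ennreal e + ennreal e" using m1 m2 by (rule add_mono)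
  also have "\<dots> = ennreal (2 * e)" using e by (simp add: ennreal_plus[symmetric])
  finally show ?thesis unfolding D_def .
qed

definition DK :: "real \<Rightarrow> 'n::finite set \<Rightarrow> (real ^ 'n) set" where
  "DK e K = cbox (\<chi> j. if j \<in> K then - e else 0) (\<chi> j. if j \<in> K then e else 0)"

definition AK :: "(real ^ 'n::finite) set \<Rightarrow> real \<Rightarrow> 'n set \<Rightarrow> (real ^ 'n) set" where
  "AK A e K = {a + d | a d. a \<in> A \<and> d \<in> DK e K}"

lemma mem_DK: "d \<in> DK e K \<longleftrightarrow> (\<forall>j. (if j \<in> K then - e else 0) \<le> d $ j \<and> d $ j \<le> (if j \<in> K then e else 0))"
  unfolding DK_def mem_box_cart by simp

lemma AK_compact: "compact A \<Longrightarrow> compact (AK A e K)"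
  unfolding AK_def DK_def by (intro compact_sums compact_cbox)

lemma AK_convex: "convex A \<Longrightarrow> convex (AK A e K)"
proof -
  assume A: "convex A"
  have "AK A e K = (\<Union>x\<in>A. \<Union>y\<in>DK e K. {x + y})" unfolding AK_def by auto
  then show ?thesis using convex_sums[OF A convex_box(1)] unfolding DK_def by simp
qed

lemma AK_empty: "0 \<le> e \<Longrightarrow> AK (A :: (real^'n::finite) set) e {} = A"
proof -
  have z: "(0 \<le> c \<and> c \<le> 0) \<longleftrightarrow> c = 0" for c :: real by linarith
  show ?thesis
  proof (rule set_eqI)
    fix x
    show "x \<in> AK A e {} \<longleftrightarrow> x \<in> A"
    proof
      assume "x \<in> AK A e {}"
      then obtain a d where "x = a + d" "a \<in> A" "d \<in> DK e {}" unfolding AK_def by blast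
      moreover have "d = 0" using \<open>d \<in> DK e {}\<close> unfolding mem_DK by (simp add: vec_eq_iff z)
      ultimately show "x \<in> A" by simp
    next
      assume "x \<in> A"
      moreover have "(0::real^'n) \<in> DK e {}" unfolding mem_DK by simp
      ultimately have "x = x + 0 \<and> x \<in> A \<and> (0::real^'n) \<in> DK e {}" by simp
      then show "x \<in> AK A e {}" unfolding AK_def by blast
    qed
  qed
qed

lemma enlarge_AK: assumes "0 \<le> e" shows "enlarge A e \<subseteq> AK A e UNIV"
proof
  fix x assume "x \<in> enlarge A e"
  then obtain a b where x: "x = a + e *\<^sub>R b" "a \<in> A" "norm b \<le> 1" unfolding enlarge_def by auto
  have ab: "\<bar>(e *\<^sub>R b) $ j\<bar> \<le> e" for j
  proof -
    have "\<bar>b $ j\<bar> \<le> 1" using component_le_norm_cart[of b j] x(3) by linarith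
    then have "e * \<bar>b $ j\<bar> \<le> e * 1" using \<open>0 \<le> e\<close> by (intro mult_left_mono) auto
    then show ?thesis using \<open>0 \<le> e\<close> by (simp add: abs_mult)
  qed
  have "- e \<le> (e *\<^sub>R b) $ j \<and> (e *\<^sub>R b) $ j \<le> e" for j
    using ab[of j] unfolding abs_le_iff by linarith
  then have "e *\<^sub>R b \<in> DK e UNIV" unfolding mem_DK by simp
  then show "x \<in> AK A e UNIV" unfolding AK_def using x(1,2) by blast
qed

lemma slice_shift:
  fixes x :: "'n::finite \<Rightarrow> real"
  assumes k: "k \<notin> K" and y: "vec_lambda (x(k := y)) \<in> AK A e (insert k K)"
  shows "\<exists>s. \<bar>s - y\<bar> \<le> e \<and> vec_lambda (x(k := s)) \<in> AK A e K"
proof -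
  obtain a d where ad: "vec_lambda (x(k := y)) = a + d" "a \<in> A" "d \<in> DK e (insert k K)"
    using y unfolding AK_def by blast
  define d' where "d' = (\<chi> j. if j = k then 0 else d $ j)"
  define s where "s = y - d $ k"
  have dall: "\<And>j. (if j \<in> insert k K then - e else 0) \<le> d $ j \<and> d $ j \<le> (if j \<in> insert k K then e else 0)"
    using ad(3) unfolding mem_DK by blast
  have dk: "- e \<le> d $ k \<and> d $ k \<le> e" using dall[of k] by simp
  have "d' \<in> DK e K" unfolding mem_DK
  proof
    fix j
    show "(if j \<in> K then - e else 0) \<le> d' $ j \<and> d' $ j \<le> (if j \<in> K then e else 0)"
    proof (cases "j = k")
      case True then show ?thesis using k by (simp add: d'_def)
    next
      case False
      then show ?thesis using dall[of j] by (simp add: d'_def)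
    qed
  qed
  moreover have "vec_lambda (x(k := s)) = a + d'"
  proof (subst vec_eq_iff, intro allI)
    fix j
    have "vec_lambda (x(k := y)) $ j = (a + d) $ j" using ad(1) by simp
    then show "vec_lambda (x(k := s)) $ j = (a + d') $ j"
      by (cases "j = k") (auto simp: d'_def s_def)
  qed
  ultimately have "vec_lambda (x(k := s)) \<in> AK A e K" using ad(2) unfolding AK_def by blast
  moreover have "\<bar>s - y\<bar> \<le> e" using dk by (simp add: s_def abs_le_iff)
  ultimately show ?thesis by blast
qed

lemma slice_convex:
  fixes x :: "'n::finite \<Rightarrow> real"
  assumes S: "convex S"
  shows "convex {y. vec_lambda (x(k := y)) \<in> S}"
  unfolding convex_def
proof safe
  fix y1 y2 u v :: real
  assume y: "vec_lambda (x(k := y1)) \<in> S" "vec_lambda (x(k := y2)) \<in> S" "0 \<le> u" "0 \<le> v" "u + v = 1"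
  have "vec_lambda (x(k := u *\<^sub>R y1 + v *\<^sub>R y2)) = u *\<^sub>R vec_lambda (x(k := y1)) + v *\<^sub>R vec_lambda (x(k := y2))"
  proof (subst vec_eq_iff, intro allI)
    fix j
    show "vec_lambda (x(k := u *\<^sub>R y1 + v *\<^sub>R y2)) $ j = (u *\<^sub>R vec_lambda (x(k := y1)) + v *\<^sub>R vec_lambda (x(k := y2))) $ j"
    proof (cases "j = k")
      case True then show ?thesis by simp
    next
      case False
      have "x j = (u + v) * x j" using y(5) by simp
      then show ?thesis using False by (simp add: algebra_simps)
    qed
  qed
  then show "vec_lambda (x(k := u *\<^sub>R y1 + v *\<^sub>R y2)) \<in> S"
    using convexD[OF S y(1,2) y(3,4,5)] by simp
qed

lemma step_bound:
  fixes g :: "'n::finite \<Rightarrow> real \<Rightarrow> real"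
  assumes gm: "\<And>k. g k \<in> borel_measurable lborel" and le1: "\<And>k x. g k x \<le> 1"
    and P: "\<And>k. prob_space (density lborel (\<lambda>x. ennreal (g k x)))"
    and k: "k \<notin> K" and A: "compact A" "convex A" and e: "0 \<le> e"
  shows "measure (distr (PiM UNIV (\<lambda>k. density lborel (\<lambda>x. ennreal (g k x)))) borel (\<lambda>f. vec_lambda f))
           (AK A e (insert k K) - AK A e K) \<le> 2 * e"
proof -
  define M where "M = (\<lambda>k. density lborel (\<lambda>x. ennreal (g k x)))"
  have sM: "\<And>k. sets (M k) = sets borel" by (simp add: M_def)
  have vm: "(\<lambda>f. vec_lambda f :: real^'n) \<in> measurable (PiM UNIV M) borel"
    by (rule vec_lambda_measurable) (simp add: sM)
  have Ym: "AK A e (insert k K) - AK A e K \<in> sets borel"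
    using AK_compact[OF A(1)] by (intro sets.Diff borel_closed compact_imp_closed)
  define X where "X = (\<lambda>f. vec_lambda f) -` (AK A e (insert k K) - AK A e K) \<inter> space (PiM UNIV M)"
  have X: "X \<in> sets (PiM UNIV M)" unfolding X_def using vm Ym by (rule measurable_sets)
  have "emeasure (PiM UNIV M) X \<le> ennreal (2 * e)"
  proof (rule prod_slice_bound[where k=k])
    show "prob_space (M k)" for k using P by (simp add: M_def)
    show "X \<in> sets (PiM UNIV M)" by (rule X)
    fix x :: "'n \<Rightarrow> real"
    define C where "C = {y. vec_lambda (x(k := y)) \<in> AK A e K}"
    have "(\<integral>\<^sup>+y. indicator X (x(k := y)) \<partial>M k) = (\<integral>\<^sup>+y. indicator {y. x(k := y) \<in> X} y \<partial>M k)"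
      by (simp add: indicator_def)
    also have "\<dots> \<le> ennreal (2 * e)"
      unfolding M_def
    proof (rule slice1d[OF gm[of k] le1[of k] _ e])
      show "convex C" unfolding C_def by (rule slice_convex[OF AK_convex[OF A(2)]])
      show "{y. x(k := y) \<in> X} \<subseteq> {y. \<exists>s\<in>C. \<bar>s - y\<bar> \<le> e} - C"
      proof
        fix y assume "y \<in> {y. x(k := y) \<in> X}"
        then have y1: "vec_lambda (x(k := y)) \<in> AK A e (insert k K)" and y2: "vec_lambda (x(k := y)) \<notin> AK A e K"
          unfolding X_def by auto
        obtain s where "\<bar>s - y\<bar> \<le> e" "vec_lambda (x(k := s)) \<in> AK A e K" using slice_shift[OF k y1] by blast
        then show "y \<in> {y. \<exists>s\<in>C. \<bar>s - y\<bar> \<le> e} - C" using y2 unfolding C_def by auto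
      qed
    qed
    finally show "(\<integral>\<^sup>+y. indicator X (x(k := y)) \<partial>M k) \<le> ennreal (2 * e)" .
  qed
  then have "enn2real (emeasure (PiM UNIV M) X) \<le> enn2real (ennreal (2 * e))"
    by (rule enn2real_mono) simp
  then have "measure (PiM UNIV M) X \<le> 2 * e" using e by (simp add: measure_def)
  then show ?thesis using measure_distr[OF vm Ym] unfolding X_def M_def by simp
qed

lemma AK_measure:
  fixes g :: "'n::finite \<Rightarrow> real \<Rightarrow> real"
  assumes gm: "\<And>k. g k \<in> borel_measurable lborel" and le1: "\<And>k x. g k x \<le> 1"
    and P: "\<And>k. prob_space (density lborel (\<lambda>x. ennreal (g k x)))"
    and A: "compact A" "convex A" and e: "0 \<le> e" and K: "finite K"
  shows "measure (distr (PiM UNIV (\<lambda>k. density lborel (\<lambda>x. ennreal (g k x)))) borel (\<lambda>f. vec_lambda f))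
           (AK A e K - A) \<le> 2 * e * card K"
  using K
proof (induction K rule: finite_induct)
  case empty
  then show ?case using AK_empty[OF e, of A] by simp
next
  case (insert k K)
  define M where "M = (\<lambda>k. density lborel (\<lambda>x. ennreal (g k x)))"
  define mu where "mu = distr (PiM UNIV M) borel (\<lambda>f. vec_lambda f :: real^'n)"
  have vm: "(\<lambda>f. vec_lambda f :: real^'n) \<in> measurable (PiM UNIV M) borel"
    by (rule vec_lambda_measurable) (simp add: M_def)
  interpret PM: prob_space "PiM UNIV M" by (rule prob_space_PiM) (use P in \<open>auto simp: M_def\<close>)
  interpret mu: prob_space mu unfolding mu_def using vm by (rule PM.prob_space_distr)
  have sets_mu: "sets mu = sets borel" by (simp add: mu_def)
  have cl: "closed (AK A e J)" for J using AK_compact[OF A(1)] by (rule compact_imp_closed)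
  have m1: "AK A e K - A \<in> sets mu" unfolding sets_mu using cl compact_imp_closed[OF A(1)]
    by (intro sets.Diff borel_closed) auto
  have m2: "AK A e (insert k K) - AK A e K \<in> sets mu" unfolding sets_mu using cl
    by (intro sets.Diff borel_closed) auto
  have "measure mu (AK A e (insert k K) - A) \<le> measure mu ((AK A e K - A) \<union> (AK A e (insert k K) - AK A e K))"
    by (rule mu.finite_measure_mono) (use m1 m2 in auto)
  also have "\<dots> \<le> measure mu (AK A e K - A) + measure mu (AK A e (insert k K) - AK A e K)"
    by (rule measure_Un_le[OF m1 m2])
  also have "\<dots> \<le> 2 * e * card K + 2 * e"
    using insert.IH step_bound[OF gm le1 P insert.hyps(2) A e] unfolding mu_def M_def
    by (intro add_mono) auto
  also have "\<dots> = 2 * e * card (insert k K)" using insert.hyps by (simp add: algebra_simps)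
  finally show ?case unfolding mu_def M_def .
qed

theorem corollary5p11:
  fixes g :: "'n::finite \<Rightarrow> real \<Rightarrow> real"
    and \<mu> :: "(real ^ 'n) measure"
  assumes logconc: "\<And>k. log_concave_density (g k)"
    and prob: "\<And>k. prob_space (density lborel (\<lambda>x. ennreal (g k x)))"
    and var: "\<And>k. prob_space.variance (density lborel (\<lambda>x. ennreal (g k x))) (\<lambda>x. x) = 1"
    and mu: "\<mu> = distr (PiM UNIV (\<lambda>k. density lborel (\<lambda>x. ennreal (g k x)))) borel
                  (\<lambda>f. vec_lambda f)"
  shows "Gamma_conv \<mu> \<le> ereal (2 * real CARD('n))"
proof -
  have gm: "\<And>k. g k \<in> borel_measurable lborel" using logconc unfolding log_concave_density_def by auto
  have le1: "\<And>k x. g k x \<le> 1" by (rule dens_le_1[OF logconc prob var])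
  define M where "M = (\<lambda>k. density lborel (\<lambda>x. ennreal (g k x)))"
  have vm: "(\<lambda>f. vec_lambda f :: real^'n) \<in> measurable (PiM UNIV M) borel"
    by (rule vec_lambda_measurable) (simp add: M_def)
  interpret PM: prob_space "PiM UNIV M" by (rule prob_space_PiM) (use prob in \<open>auto simp: M_def\<close>)
  interpret mu: prob_space \<mu> unfolding mu M_def[symmetric] using vm by (rule PM.prob_space_distr)
  have sets_mu: "sets \<mu> = sets borel" by (simp add: mu)
  have surf: "surface_measure \<mu> A \<le> ereal (2 * real CARD('n))" if "convex_body A" for A
  proof -
    have A: "compact A" "convex A" using that unfolding convex_body_def by auto
    have bnd: "measure \<mu> (enlarge A e - A) / e \<le> 2 * real CARD('n)" if e: "0 < e" for e
    proof -
      have mA: "AK A e UNIV - A \<in> sets \<mu>" unfolding sets_mu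
        using compact_imp_closed[OF AK_compact[OF A(1)]] compact_imp_closed[OF A(1)]
        by (intro sets.Diff borel_closed) auto
      have "measure \<mu> (enlarge A e - A) \<le> measure \<mu> (AK A e UNIV - A)"
        by (rule mu.finite_measure_mono) (use enlarge_AK[of e A] e mA in auto)
      also have "\<dots> \<le> 2 * e * card (UNIV :: 'n set)"
        unfolding mu by (rule AK_measure[OF gm le1 prob A]) (use e in auto)
      finally have "measure \<mu> (enlarge A e - A) \<le> e * (2 * real CARD('n))" by (simp add: algebra_simps)
      then show ?thesis using e by (simp add: divide_le_eq mult.commute)
    qed
    have ev: "eventually (\<lambda>e. ereal (measure \<mu> (enlarge A e - A) / e) \<le> ereal (2 * real CARD('n))) (at_right 0)"
      unfolding eventually_at_right_field using bnd by (intro exI[of _ 1]) auto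
    have "surface_measure \<mu> A \<le> Limsup (at_right 0) (\<lambda>e. ereal (measure \<mu> (enlarge A e - A) / e))"
      unfolding surface_measure_def by (rule Liminf_le_Limsup) simp
    also have "\<dots> \<le> ereal (2 * real CARD('n))" by (rule Limsup_bounded[OF ev])
    finally show ?thesis .
  qed
  show ?thesis unfolding Gamma_conv_def by (rule SUP_least) (use surf in auto)
qed


end
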